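(* Let $(X,d_X)$, $(Y,d_Y)$ be metric spaces and $f:X\to X$, $g:Y\to Y$ maps. Suppose $h:X\to Y$ is a homeomorphism with $h\circ f=g\circ h$. Then for all $x,y\in X$, $x\,\mathcal{C}^+\,y$ (with respect to $f$) if and only if $h(x)\,\mathcal{C}^+\,h(y)$ (with respect to $g$).
   Context: For a metric space $(X,d)$ and a map $f:X\to X$, let $C(X,\mathbb{R}^+)$ be the set of continuous functions $\varepsilon:X\to(0,\infty)$. Write $x\,\mathcal{C}^+\,y$ if for every $\varepsilon\in C(X,\mathbb{R}^+)$ there are finitely many points $x_0=x,x_1,\dots,x_n=y$ in $X$, $n\in\mathbb{N}$, with $d(f(x_i),x_{i+1})<\varepsilon(f(x_i))$ for all $i=0,\dots,n-1$. *)

theory Defs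
  imports "HOL-Analysis.Analysis"
begin

definition chain_plus :: "('a::metric_space \<Rightarrow> 'a) \<Rightarrow> 'a \<Rightarrow> 'a \<Rightarrow> bool" where
  "chain_plus f x y \<longleftrightarrow>
     (\<forall>eps :: 'a \<Rightarrow> real. continuous_on UNIV eps \<and> (\<forall>z. 0 < eps z) \<longrightarrow>
        (\<exists>n::nat. \<exists>xs :: nat \<Rightarrow> 'a. n \<ge> 1 \<and> xs 0 = x \<and> xs n = y \<and>
           (\<forall>i<n. dist (f (xs i)) (xs (Suc i)) < eps (f (xs i)))))"

end

theory Submission
  imports Defs
begin

lemma local_bound:
  fixes h :: "'a::metric_space \<Rightarrow> 'b::metric_space" and E :: "'a \<Rightarrow> real"
  assumes hc: "continuous_on UNIV h" and Ec: "continuous_on UNIV E" and Ep: "\<And>p. 0 < E p"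
  defines "S \<equiv> \<lambda>p. {q. E p \<le> dist (h p) (h q)}"
  defines "\<rho> \<equiv> \<lambda>p. if S p = {} then 1 else min 1 (infdist p (S p))"
  shows "\<exists>c>0. \<exists>s>0. \<forall>z. dist p0 z < s \<longrightarrow> c \<le> \<rho> z"
proof -
  define e0 where "e0 = E p0"
  have e0: "e0 > 0" using Ep by (simp add: e0_def)
  have "isCont E p0" using Ec by (simp add: continuous_on_eq_continuous_at)
  then obtain s1 where s1: "s1 > 0" "\<And>z. dist z p0 < s1 \<Longrightarrow> dist (E z) (E p0) < e0/2"
    using e0 unfolding continuous_at_eps_delta by (metis half_gt_zero)
  have "isCont h p0" using hc by (simp add: continuous_on_eq_continuous_at)
  then obtain s2 where s2: "s2 > 0" "\<And>z. dist z p0 < s2 \<Longrightarrow> dist (h z) (h p0) < e0/4"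
    using e0 unfolding continuous_at_eps_delta by (metis divide_pos_pos zero_less_numeral)
  show ?thesis
  proof (intro exI conjI allI impI)
    show "min 1 (s2/2) > 0" "min s1 (s2/2) > 0" using s1 s2 by auto
    fix z assume z: "dist p0 z < min s1 (s2/2)"
    show "min 1 (s2/2) \<le> \<rho> z"
    proof (cases "S z = {}")
      case True then show ?thesis by (simp add: \<rho>_def)
    next
      case False
      have Ez: "E z > e0/2" 
      proof -
        have "\<bar>E z - E p0\<bar> < e0/2" using s1(2)[of z] z by (auto simp: dist_commute dist_real_def abs_minus_commute)
        then show ?thesis unfolding e0_def by linarith
      qed
      have hz: "dist (h z) (h p0) < e0/4" 
      proof -
        have a: "dist p0 z * 2 < s2" using z by simp
        have b: "0 \<le> dist p0 z" by simp
        from a b have "dist p0 z < s2" by linarith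
        then have "dist z p0 < s2" by (simp add: dist_commute)
        then show ?thesis using s2(2) by blast
      qed
      have "s2/2 \<le> dist z q" if q: "q \<in> S z" for q
      proof (rule ccontr)
        assume "\<not> ?thesis"
        then have "dist q p0 < s2" using z dist_triangle[of q p0 z]
          by (auto simp: dist_commute)
        then have "dist (h q) (h p0) < e0/4" using s2(2) by blast
        then have "dist (h z) (h q) < e0/2" using hz dist_triangle[of "h z" "h q" "h p0"]
          by (auto simp: dist_commute)
        then show False using q Ez by (auto simp: S_def)
      qed
      then have "s2/2 \<le> (INF q\<in>S z. dist z q)" using False
        by (intro cINF_greatest) auto
      then have "s2/2 \<le> infdist z (S z)" using False by (simp add: infdist_notempty)
      then show ?thesis using False by (auto simp: \<rho>_def)
    qed
  qed
qed

lemma key: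
  fixes h :: "'a::metric_space \<Rightarrow> 'b::metric_space" and E :: "'a \<Rightarrow> real"
  assumes hc: "continuous_on UNIV h" and Ec: "continuous_on UNIV E" and Ep: "\<And>p. 0 < E p"
  shows "\<exists>\<delta>::'a \<Rightarrow> real. continuous_on UNIV \<delta> \<and> (\<forall>z. 0 < \<delta> z) \<and>
     (\<forall>p q. dist p q < \<delta> p \<longrightarrow> dist (h p) (h q) < E p)"
proof -
  define S where "S \<equiv> \<lambda>p. {q. E p \<le> dist (h p) (h q)}"
  define \<rho> where "\<rho> \<equiv> \<lambda>p. if S p = {} then 1 else min 1 (infdist p (S p))"
  have lb: "\<exists>c>0. \<exists>s>0. \<forall>z. dist p0 z < s \<longrightarrow> c \<le> \<rho> z" for p0
    using local_bound[OF hc Ec Ep, of p0] unfolding S_def \<rho>_def by blast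
  have rho_nn: "0 \<le> \<rho> p" for p by (simp add: \<rho>_def infdist_nonneg)
  have rho_prop: "dist (h p) (h q) < E p" if "dist p q < \<rho> p" for p q
  proof (rule ccontr)
    assume "\<not> ?thesis"
    then have q: "q \<in> S p" by (auto simp: S_def)
    then have "S p \<noteq> {}" by auto
    then have "\<rho> p \<le> dist p q" using infdist_le[OF q, of p] by (auto simp: \<rho>_def)
    then show False using that by simp
  qed
  define \<delta> where "\<delta> \<equiv> \<lambda>p. Inf (range (\<lambda>z. dist p z + \<rho> z))"
  have bdd: "bdd_below (range (\<lambda>z. dist p z + \<rho> z))" for p
    by (rule bdd_belowI2[where m=0]) (auto intro: add_nonneg_nonneg rho_nn)
  have low: "\<delta> p \<le> dist p z + \<rho> z" for p z
    unfolding \<delta>_def by (rule cInf_lower) (auto intro: bdd)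
  have d_rho: "\<delta> p \<le> \<rho> p" for p using low[of p p] by simp
  have pos: "0 < \<delta> p" for p
  proof -
    obtain c s where cs: "c > 0" "s > 0" "\<And>z. dist p z < s \<Longrightarrow> c \<le> \<rho> z" using lb[of p] by blast
    have "min c s \<le> dist p z + \<rho> z" for z
    proof (cases "dist p z < s")
      case True then show ?thesis using cs(3)[of z] by (simp add: min.coboundedI1 add_increasing)
    next
      case False then show ?thesis using rho_nn[of z] by (simp add: min.coboundedI2 add_increasing2)
    qed
    then have "min c s \<le> \<delta> p" unfolding \<delta>_def by (intro cInf_greatest) auto
    then show ?thesis using cs by simp
  qed
  have lip: "\<delta> p \<le> \<delta> p' + dist p p'" for p p'
  proof -
    have "\<delta> p - dist p p' \<le> Inf (range (\<lambda>z. dist p' z + \<rho> z))"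
    proof (rule cInf_greatest)
      show "range (\<lambda>z. dist p' z + \<rho> z) \<noteq> {}" by simp
      fix x assume "x \<in> range (\<lambda>z. dist p' z + \<rho> z)"
      then obtain z where x: "x = dist p' z + \<rho> z" by auto
      have "\<delta> p \<le> dist p z + \<rho> z" by (rule low)
      also have "\<dots> \<le> dist p p' + dist p' z + \<rho> z" using dist_triangle[of p z p'] by simp
      finally show "\<delta> p - dist p p' \<le> x" using x by simp
    qed
    then show ?thesis by (simp add: \<delta>_def)
  qed
  have "1-lipschitz_on UNIV \<delta>"
  proof (rule lipschitz_onI)
    fix x y :: 'a
    show "dist (\<delta> x) (\<delta> y) \<le> 1 * dist x y"
      using lip[of x y] lip[of y x] by (auto simp: dist_real_def dist_commute abs_le_iff)
  qed simp
  then have "continuous_on UNIV \<delta>" by (rule lipschitz_on_continuous_on)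
  moreover have "\<forall>p q. dist p q < \<delta> p \<longrightarrow> dist (h p) (h q) < E p"
    using rho_prop d_rho by (meson less_le_trans)
  ultimately show ?thesis using pos by blast
qed

lemma one_dir:
  fixes f :: "'a::metric_space \<Rightarrow> 'a" and g :: "'b::metric_space \<Rightarrow> 'b"
    and h :: "'a \<Rightarrow> 'b"
  assumes hc: "continuous_on UNIV h" and comm: "\<And>x. h (f x) = g (h x)"
    and cp: "chain_plus f x y"
  shows "chain_plus g (h x) (h y)"
  unfolding chain_plus_def
proof (intro allI impI)
  fix eps :: "'b \<Rightarrow> real"
  assume e: "continuous_on UNIV eps \<and> (\<forall>z. 0 < eps z)"
  have Ec: "continuous_on UNIV (eps \<circ> h)"
    using e hc by (metis continuous_on_compose subset_UNIV continuous_on_subset)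
  obtain \<delta> :: "'a \<Rightarrow> real" where d: "continuous_on UNIV \<delta>" "\<forall>z. 0 < \<delta> z"
    "\<forall>p q. dist p q < \<delta> p \<longrightarrow> dist (h p) (h q) < (eps \<circ> h) p"
    using key[OF hc Ec] e by auto
  obtain n xs where n: "n \<ge> 1" "xs 0 = x" "xs n = y"
    "\<forall>i<n. dist (f (xs i)) (xs (Suc i)) < \<delta> (f (xs i))"
    using cp d(1,2) unfolding chain_plus_def by blast
  show "\<exists>n xs. n \<ge> 1 \<and> xs 0 = h x \<and> xs n = h y \<and>
      (\<forall>i<n. dist (g (xs i)) (xs (Suc i)) < eps (g (xs i)))"
  proof (intro exI conjI allI impI)
    fix i assume "i < n"
    then have "dist (h (f (xs i))) (h (xs (Suc i))) < eps (h (f (xs i)))"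
      using n(4) d(3) by auto
    then show "dist (g ((h \<circ> xs) i)) ((h \<circ> xs) (Suc i)) < eps (g ((h \<circ> xs) i))"
      by (simp add: comm)
  qed (use n in auto)
qed

theorem lemma4p1:
  fixes f :: "'a::metric_space \<Rightarrow> 'a" and g :: "'b::metric_space \<Rightarrow> 'b"
    and h :: "'a \<Rightarrow> 'b"
  assumes "\<exists>k. homeomorphism UNIV UNIV h k"
    and "h \<circ> f = g \<circ> h"
  shows "\<forall>x y. chain_plus f x y \<longleftrightarrow> chain_plus g (h x) (h y)"
proof -
  obtain k where hk: "homeomorphism UNIV UNIV h k" using assms(1) by blast
  have hc: "continuous_on UNIV h" and kc: "continuous_on UNIV k"
    and kh: "\<And>x. k (h x) = x" and hk': "\<And>y. h (k y) = y"
    using hk unfolding homeomorphism_def by auto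
  have comm: "\<And>x. h (f x) = g (h x)" using assms(2) by (metis comp_apply)
  have comm2: "k (g y) = f (k y)" for y
    by (metis comm hk' kh)
  show ?thesis
  proof (intro allI iffI)
    fix x y assume "chain_plus f x y"
    then show "chain_plus g (h x) (h y)" using one_dir[OF hc, of f g] comm by blast
  next
    fix x y assume "chain_plus g (h x) (h y)"
    then have "chain_plus f (k (h x)) (k (h y))" using one_dir[OF kc, of g f] comm2 by blast
    then show "chain_plus f x y" by (simp add: kh)
  qed
qed

end
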